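(* Let $n,m$ be positive integers. Every winning sequence of moves $y_1,\dots,y_N$ in the $(n,m)$-game has length $N\ge m^n-1$; equivalently, no sequence of fewer than $m^n-1$ moves is winning.
   Context: The $(n,m)$-game: $n$ counters at positions $1,\dots,n$ (vertices in cyclic order of a regular $n$-gon table), each showing an element of $\mathbb{Z}_m$; a configuration is a vector in $\mathbb{Z}_m^n$, initially arbitrary and unknown. Each turn the player chooses a move $y\in\mathbb{Z}_m^n$ added coordinatewise, then the table is rotated by an adversarially chosen $k\in\mathbb{Z}_n$ (possibly $k=0$), replacing $x$ by $x'$ with $x'_{i+k}=x_i$ (indices mod $n$). The player wins if at some moment (including initially) all counters show $0$. A strategy is a finite sequence of moves; it is winning if it forces the zero configuration at some time for every initial configuration and every choice of rotations. *)

theory Defs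
  imports Main
begin

text \<open>Counters are indexed by positions 0,...,n-1 (position i+1 of the paper is index i);
a configuration in Z_m^n is a function nat => nat with values < m on positions < n
and value 0 outside.\<close>

definition config :: "nat \<Rightarrow> nat \<Rightarrow> (nat \<Rightarrow> nat) \<Rightarrow> bool" where
  "config n m x \<longleftrightarrow> (\<forall>i. (i < n \<longrightarrow> x i < m) \<and> (n \<le> i \<longrightarrow> x i = 0))"

definition add_move :: "nat \<Rightarrow> nat \<Rightarrow> (nat \<Rightarrow> nat) \<Rightarrow> (nat \<Rightarrow> nat) \<Rightarrow> (nat \<Rightarrow> nat)" where
  "add_move n m x y = (\<lambda>i. if i < n then (x i + y i) mod m else 0)"

text \<open>Rotation by k in Z_n: the result x' satisfies x'_{(i+k) mod n} = x_i.\<close>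
definition rotate_cfg :: "nat \<Rightarrow> nat \<Rightarrow> (nat \<Rightarrow> nat) \<Rightarrow> (nat \<Rightarrow> nat)" where
  "rotate_cfg n k x = (\<lambda>j. if j < n then x ((j + n - k mod n) mod n) else 0)"

primrec play :: "nat \<Rightarrow> nat \<Rightarrow> (nat \<Rightarrow> nat) \<Rightarrow> (nat \<Rightarrow> nat) list \<Rightarrow> (nat \<Rightarrow> nat) \<Rightarrow> nat \<Rightarrow> (nat \<Rightarrow> nat)" where
  "play n m x ys ks 0 = x"
| "play n m x ys ks (Suc t) = rotate_cfg n (ks t) (add_move n m (play n m x ys ks t) (ys ! t))"

definition winning :: "nat \<Rightarrow> nat \<Rightarrow> (nat \<Rightarrow> nat) list \<Rightarrow> bool" where
  "winning n m ys \<longleftrightarrow> (\<forall>y \<in> set ys. config n m y) \<and>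
     (\<forall>x ks. config n m x \<longrightarrow> (\<exists>t \<le> length ys. play n m x ys ks t = (\<lambda>_. 0)))"

end

theory Submission
  imports Defs
begin

lemma card_configs:
  assumes "0 < m"
  shows "card {x. config n m x} = m ^ n"
proof -
  let ?L = "{xs. set xs \<subseteq> {..<m} \<and> length xs = n}"
  let ?h = "\<lambda>xs i. if i < n then xs ! i else (0::nat)"
  have inj: "inj_on ?h ?L"
  proof (rule inj_onI)
    fix xs zs assume a: "xs \<in> ?L" "zs \<in> ?L" "?h xs = ?h zs"
    show "xs = zs"
    proof (rule nth_equalityI)
      show "length xs = length zs" using a by simp
      fix i assume "i < length xs"
      then show "xs ! i = zs ! i" using a fun_cong[OF a(3), of i] by simp
    qed
  qed
  have img: "?h ` ?L = {x. config n m x}"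
  proof
    show "?h ` ?L \<subseteq> {x. config n m x}"
      using nth_mem by (fastforce simp: config_def)
  next
    show "{x. config n m x} \<subseteq> ?h ` ?L"
    proof
      fix x assume "x \<in> {x. config n m x}"
      then have c: "config n m x" by simp
      have "x = ?h (map x [0..<n])"
        using c by (auto simp: config_def fun_eq_iff)
      moreover have "map x [0..<n] \<in> ?L" using c by (auto simp: config_def)
      ultimately show "x \<in> ?h ` ?L" by blast
    qed
  qed
  have "card {x. config n m x} = card ?L" using card_image[OF inj] img by simp
  also have "\<dots> = m ^ n" using card_lists_length_eq[of "{..<m}" n] by simp
  finally show ?thesis .
qed

lemma modcanc: "(a + c) mod m = (b + c) mod (m::nat) \<Longrightarrow> a < m \<Longrightarrow> b < m \<Longrightarrow> a = b"
proof (induction a b rule: linorder_wlog)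
  case (le a b)
  then have "m dvd (b + c) - (a + c)" using mod_eq_dvd_iff_nat[of "a+c" "b+c" m] by simp
  then have "m dvd b - a" by simp
  moreover have "b - a < m" using le by simp
  ultimately have "b - a = 0" using dvd_imp_le by (metis gr0I leD)
  then show ?case using le by simp
next
  case (sym a b) then show ?case by simp
qed

lemma add_move_config:
  assumes "0 < m" shows "config n m (add_move n m x y)"
  using assms by (auto simp: config_def add_move_def)

lemma rot0: "config n m z \<Longrightarrow> rotate_cfg n 0 z = z"
  by (auto simp: rotate_cfg_def config_def fun_eq_iff)

lemma play_config:
  assumes "0 < m" "config n m x"
  shows "config n m (play n m x ys (\<lambda>_. 0) t)"
  using assms by (induction t) (auto simp: rot0[OF add_move_config[OF assms(1)]] add_move_config)

lemma play_inj:
  assumes "0 < m" "config n m x" "config n m x'"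
    and "play n m x ys (\<lambda>_. 0) t = play n m x' ys (\<lambda>_. 0) t"
  shows "x = x'"
  using assms(4)
proof (induction t)
  case 0 then show ?case by simp
next
  case (Suc t)
  let ?p = "play n m x ys (\<lambda>_. 0) t" and ?q = "play n m x' ys (\<lambda>_. 0) t"
  have cp: "config n m ?p" "config n m ?q" using play_config assms by auto
  have "add_move n m ?p (ys ! t) = add_move n m ?q (ys ! t)"
    using Suc.prems by (simp add: rot0[OF add_move_config[OF assms(1)]])
  then have "?p = ?q"
  proof -
    assume e: "add_move n m ?p (ys ! t) = add_move n m ?q (ys ! t)"
    show ?thesis
    proof
      fix i
      show "?p i = ?q i"
      proof (cases "i < n")
        case True
        have "(?p i + (ys ! t) i) mod m = (?q i + (ys ! t) i) mod m"
          using fun_cong[OF e, of i] True by (simp add: add_move_def)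
        moreover have "?p i < m" "?q i < m" using cp True by (auto simp: config_def)
        ultimately show ?thesis by (rule modcanc)
      next
        case False then show ?thesis using cp by (auto simp: config_def)
      qed
    qed
  qed
  then show ?case by (rule Suc.IH)
qed

theorem theorem5p1:
  fixes n m :: nat and ys :: "(nat \<Rightarrow> nat) list"
  assumes "0 < n" and "0 < m" and "winning n m ys"
  shows "m ^ n - 1 \<le> length ys"
proof -
  let ?N = "length ys"
  let ?P = "\<lambda>x t. t \<le> ?N \<and> play n m x ys (\<lambda>_. 0) t = (\<lambda>_. 0)"
  define f where "f x = (LEAST t. ?P x t)" for x
  have ex: "\<exists>t. ?P x t" if "config n m x" for x
    using assms(3) that unfolding winning_def by blast
  have fP: "?P x (f x)" if "config n m x" for x
    unfolding f_def using LeastI_ex[OF ex[OF that]] .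
  have "inj_on f {x. config n m x}"
  proof (rule inj_onI)
    fix x x' assume a: "x \<in> {x. config n m x}" "x' \<in> {x. config n m x}" "f x = f x'"
    show "x = x'"
      by (rule play_inj[OF assms(2), where x=x and x'=x' and ys=ys and t="f x"]) (use a fP[of x] fP[of x'] in auto)
  qed
  moreover have "f ` {x. config n m x} \<subseteq> {0..?N}" using fP by auto
  ultimately have "card {x. config n m x} \<le> card {0..?N}"
    by (rule card_inj_on_le) simp
  then have "m ^ n \<le> ?N + 1" using card_configs[OF assms(2)] by simp
  then show ?thesis by simp
qed

end
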